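(* For every $7$-uniform hypergraph $H=(V,E)$ with $m=|E|$, \[96050\,\tau(H) \le 11093\,n_1 + 17131\,n_2 + 18250\,n_3 + 18400\,n_{\ge 4} + 18400\,m.\] Consequently $c_7 \le 18400/96050$.
   Context: A hypergraph $H=(V,E)$ consists of a finite vertex set $V$ and a finite collection $E$ of subsets of $V$ (edges); it is $k$-uniform if every edge has exactly $k$ vertices. The degree of a vertex $v$ is the number of edges containing $v$. For $i\ge 1$, $n_i$ denotes the number of vertices of degree exactly $i$, and $n_{\ge i}=\sum_{j\ge i} n_j$. A transversal is a vertex set meeting every edge; $\tau(H)$ is the minimum size of a transversal. The Tuza constant is $c_k=\sup \tau(H)/(|E|+|V|)$ over all $k$-uniform hypergraphs $H$. *)

theory Defs
  imports Complex_Main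
begin

definition hypergraph :: "'a set \<Rightarrow> 'a set set \<Rightarrow> bool" where
  "hypergraph V E \<longleftrightarrow> finite V \<and> (\<forall>e\<in>E. e \<subseteq> V)"

definition uniform :: "nat \<Rightarrow> 'a set \<Rightarrow> 'a set set \<Rightarrow> bool" where
  "uniform k V E \<longleftrightarrow> hypergraph V E \<and> (\<forall>e\<in>E. card e = k)"

definition hdegree :: "'a set set \<Rightarrow> 'a \<Rightarrow> nat" where
  "hdegree E v = card {e\<in>E. v \<in> e}"

definition n_deg :: "'a set \<Rightarrow> 'a set set \<Rightarrow> nat \<Rightarrow> nat" where
  "n_deg V E i = card {v\<in>V. hdegree E v = i}"

definition n_deg_ge :: "'a set \<Rightarrow> 'a set set \<Rightarrow> nat \<Rightarrow> nat" where
  "n_deg_ge V E i = card {v\<in>V. hdegree E v \<ge> i}"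

definition transversal :: "'a set \<Rightarrow> 'a set set \<Rightarrow> 'a set \<Rightarrow> bool" where
  "transversal V E T \<longleftrightarrow> T \<subseteq> V \<and> (\<forall>e\<in>E. T \<inter> e \<noteq> {})"

definition tau :: "'a set \<Rightarrow> 'a set set \<Rightarrow> nat" where
  "tau V E = (LEAST t. \<exists>T. transversal V E T \<and> card T = t)"

text \<open>Tuza constant: supremum of tau/(|E|+|V|) over all k-uniform hypergraphs
  (vertex type nat suffices, every finite hypergraph being isomorphic to one on nat).\<close>

definition tuza_const :: "nat \<Rightarrow> real" where
  "tuza_const k = Sup {real (tau V E) / real (card E + card V) | (V :: nat set) E. uniform k V E}"

end

theory Submission
  imports Defs
begin

definition phi :: "nat \<Rightarrow> nat" where
  "phi d = (if d \<le> 1 then 0 else if d = 2 then 50000 else if d = 3 then 110000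
            else 185000 + 78000 * (d - 4))"

definition incr :: "nat \<Rightarrow> nat" where
  "incr c = (if c \<le> 1 then 0 else if c = 2 then 50000 else if c = 3 then 60000
             else if c = 4 then 75000 else 78000)"

definition fw :: "nat \<Rightarrow> nat" where
  "fw d = (if d = 0 then 0 else if d = 1 then 11093 else if d = 2 then 17131
           else if d = 3 then 18250 else 18400)"

lemma phi_step: "a + 1 \<le> c \<Longrightarrow> phi (a + 1) \<le> phi a + incr c"
  unfolding phi_def incr_def by auto

lemma phi_conv: "a + k \<le> c \<Longrightarrow> phi (a + k) \<le> phi a + k * incr c"
proof (induction k)
  case 0
  then show ?case by simp
next
  case (Suc k)
  have "phi (a + Suc k) = phi ((a + k) + 1)" by simp
  also have "\<dots> \<le> phi (a + k) + incr c" using phi_step[of "a+k" c] Suc.prems by simp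
  also have "\<dots> \<le> phi a + k * incr c + incr c" using Suc by simp
  finally show ?case by simp
qed

lemma step_ineq: "1 \<le> c \<Longrightarrow> phi c + 6 * c * incr c + 672350 \<le> 672350 * c"
  unfolding phi_def incr_def by auto

lemma phi_g: "77650 * d \<le> phi d + 7 * fw d"
  unfolding phi_def fw_def by auto

lemma fw_le: "fw d \<le> 18400"
  unfolding fw_def by auto

lemma card_filter_sum: "finite A \<Longrightarrow> card {x\<in>A. P x} = (\<Sum>x\<in>A. if P x then 1 else 0)"
  by (simp add: sum.inter_filter[symmetric])

lemma handshake:
  assumes "finite A" "finite E"
  shows "(\<Sum>u\<in>A. card {e\<in>E. u \<in> e}) = (\<Sum>e\<in>E. card (e \<inter> A))"
proof -
  have "(\<Sum>u\<in>A. card {e\<in>E. u \<in> e}) = (\<Sum>u\<in>A. \<Sum>e\<in>E. if u \<in> e then 1 else 0)"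
    using assms by (simp add: card_filter_sum)
  also have "\<dots> = (\<Sum>e\<in>E. \<Sum>u\<in>A. if u \<in> e then 1 else 0)"
    by (rule sum.swap)
  also have "\<dots> = (\<Sum>e\<in>E. card (e \<inter> A))"
  proof (rule sum.cong)
    fix e assume "e \<in> E"
    have "e \<inter> A = {u\<in>A. u \<in> e}" by auto
    then show "(\<Sum>u\<in>A. if u \<in> e then 1 else 0) = card (e \<inter> A)"
      using assms by (simp add: card_filter_sum)
  qed simp
  finally show ?thesis .
qed


lemma main:
  assumes V: "finite V"
  shows "finite E \<Longrightarrow> (\<forall>e\<in>E. e \<subseteq> V \<and> card e = 7) \<Longrightarrow>
    \<exists>T\<subseteq>V. (\<forall>e\<in>E. T \<inter> e \<noteq> {}) \<and>
        672350 * card T + (\<Sum>u\<in>V. phi (hdegree E u)) \<le> 672350 * card E"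
proof (induction E rule: finite_psubset_induct)
  case (psubset E)
  note E7 = psubset.prems
  show ?case
  proof (cases "E = {}")
    case True
    then show ?thesis by (auto simp: hdegree_def phi_def)
  next
    case False
    then obtain e0 where e0: "e0 \<in> E" by auto
    have "card e0 = 7" using E7 e0 by auto
    then obtain u0 where u0: "u0 \<in> e0" by fastforce
    have u0V: "u0 \<in> V" using E7 e0 u0 by auto
    have fin_deg: "\<And>u. finite {e\<in>E. u \<in> e}" using psubset.hyps by simp
    have "{e\<in>E. u0 \<in> e} \<noteq> {}" using e0 u0 by auto
    hence d0: "hdegree E u0 \<ge> 1" unfolding hdegree_def using fin_deg[of u0]
      by (simp add: Suc_le_eq card_gt_0_iff)
    define c where "c = Max (hdegree E ` V)"
    have cmax: "\<And>u. u \<in> V \<Longrightarrow> hdegree E u \<le> c" unfolding c_def using V by simp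
    have "c \<in> hdegree E ` V" unfolding c_def using V u0V by (intro Max_in) auto
    then obtain v where vV: "v \<in> V" and vc: "hdegree E v = c" by auto
    have c1: "1 \<le> c" using cmax[OF u0V] d0 by simp
    define Ev where "Ev = {e\<in>E. v \<in> e}"
    define E' where "E' = {e\<in>E. v \<notin> e}"
    have cardEv: "card Ev = c" using vc unfolding Ev_def hdegree_def by simp
    have finEv: "finite Ev" using psubset.hyps unfolding Ev_def by simp
    have finE': "finite E'" using psubset.hyps unfolding E'_def by simp
    have EvNE: "Ev \<noteq> {}" using cardEv c1 by auto
    have Eun: "E = E' \<union> Ev" and disj: "E' \<inter> Ev = {}" unfolding E'_def Ev_def by auto
    have cardE: "card E = card E' + c"
      using card_Un_disjoint[OF finE' finEv disj] Eun cardEv by simp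
    have sub: "E' \<subset> E" using Eun disj EvNE by blast
    have E'7: "\<forall>e\<in>E'. e \<subseteq> V \<and> card e = 7" using E7 sub by auto
    from psubset.IH[OF sub E'7] obtain T' where T'V: "T' \<subseteq> V"
      and T'tr: "\<forall>e\<in>E'. T' \<inter> e \<noteq> {}"
      and T'b: "672350 * card T' + (\<Sum>u\<in>V. phi (hdegree E' u)) \<le> 672350 * card E'" by blast
    define T where "T = insert v T'"
    have TV: "T \<subseteq> V" using T'V vV unfolding T_def by auto
    have Ttr: "\<forall>e\<in>E. T \<inter> e \<noteq> {}"
    proof
      fix e assume "e \<in> E"
      show "T \<inter> e \<noteq> {}"
      proof (cases "v \<in> e")
        case True then show ?thesis unfolding T_def by auto
      next
        case False then have "e \<in> E'" using \<open>e \<in> E\<close> unfolding E'_def by auto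
        then show ?thesis using T'tr unfolding T_def by auto
      qed
    qed
    have cardT: "card T \<le> card T' + 1"
      unfolding T_def by (simp add: card_insert_le_m1 card_insert_if)
    have degsplit: "\<And>u. hdegree E u = hdegree E' u + card {e\<in>Ev. u \<in> e}"
    proof -
      fix u
      have "{e\<in>E. u \<in> e} = {e\<in>E'. u \<in> e} \<union> {e\<in>Ev. u \<in> e}" using Eun by auto
      moreover have "{e\<in>E'. u \<in> e} \<inter> {e\<in>Ev. u \<in> e} = {}" using disj by auto
      ultimately show "hdegree E u = hdegree E' u + card {e\<in>Ev. u \<in> e}"
        unfolding hdegree_def using finE' finEv by (simp add: card_Un_disjoint)
    qed
    have degv': "hdegree E' v = 0" unfolding hdegree_def E'_def by simp
    have perU: "\<And>u. u \<in> V - {v} \<Longrightarrow>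
        phi (hdegree E u) \<le> phi (hdegree E' u) + incr c * card {e\<in>Ev. u \<in> e}"
    proof -
      fix u assume "u \<in> V - {v}"
      then have le: "hdegree E' u + card {e\<in>Ev. u \<in> e} \<le> c" using cmax degsplit by auto
      show "phi (hdegree E u) \<le> phi (hdegree E' u) + incr c * card {e\<in>Ev. u \<in> e}"
        using phi_conv[OF le] degsplit[of u] by (simp add: mult.commute)
    qed
    have hs: "(\<Sum>u\<in>V - {v}. card {e\<in>Ev. u \<in> e}) = 6 * c"
    proof -
      have "(\<Sum>u\<in>V - {v}. card {e\<in>Ev. u \<in> e}) = (\<Sum>e\<in>Ev. card (e \<inter> (V - {v})))"
        using handshake[of "V - {v}" Ev] V finEv by simp
      also have "\<dots> = (\<Sum>e\<in>Ev. 6)"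
      proof (rule sum.cong)
        fix e assume eEv: "e \<in> Ev"
        then have "e \<subseteq> V" "card e = 7" "v \<in> e" using E7 unfolding Ev_def by auto
        then have "e \<inter> (V - {v}) = e - {v}" by auto
        then show "card (e \<inter> (V - {v})) = 6" using \<open>card e = 7\<close> \<open>v \<in> e\<close> by simp
      qed simp
      finally show ?thesis using cardEv by simp
    qed
    have "(\<Sum>u\<in>V. phi (hdegree E u)) = phi c + (\<Sum>u\<in>V - {v}. phi (hdegree E u))"
      using sum.remove[OF V vV, of "\<lambda>u. phi (hdegree E u)"] vc by simp
    also have "\<dots> \<le> phi c + (\<Sum>u\<in>V - {v}. phi (hdegree E' u) + incr c * card {e\<in>Ev. u \<in> e})"
      using perU by (intro add_left_mono sum_mono) auto
    also have "\<dots> = phi c + (\<Sum>u\<in>V - {v}. phi (hdegree E' u)) + incr c * (6 * c)"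
      by (simp add: sum.distrib sum_distrib_left[symmetric] hs)
    also have "(\<Sum>u\<in>V - {v}. phi (hdegree E' u)) = (\<Sum>u\<in>V. phi (hdegree E' u))"
      using sum.remove[OF V vV, of "\<lambda>u. phi (hdegree E' u)"] degv' by (simp add: phi_def)
    finally have S: "(\<Sum>u\<in>V. phi (hdegree E u)) \<le> phi c + (\<Sum>u\<in>V. phi (hdegree E' u)) + incr c * (6 * c)" .
    have st: "phi c + 6 * c * incr c + 672350 \<le> 672350 * c" using step_ineq[OF c1] .
    have "672350 * card T + (\<Sum>u\<in>V. phi (hdegree E u)) \<le> 672350 * card E"
      using S st T'b cardT cardE by (simp add: algebra_simps)
    then show ?thesis using TV Ttr by blast
  qed
qed


lemma bound_fw:
  assumes U: "uniform 7 V E"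
  shows "96050 * tau V E \<le> 18400 * card E + (\<Sum>u\<in>V. fw (hdegree E u))"
proof -
  have V: "finite V" and sub: "\<forall>e\<in>E. e \<subseteq> V" and c7: "\<forall>e\<in>E. card e = 7"
    using U unfolding uniform_def hypergraph_def by auto
  have finE: "finite E"
    using sub V by (meson Pow_iff finite_Pow_iff finite_subset subsetI)
  obtain T where TV: "T \<subseteq> V" and Ttr: "\<forall>e\<in>E. T \<inter> e \<noteq> {}"
    and Tb: "672350 * card T + (\<Sum>u\<in>V. phi (hdegree E u)) \<le> 672350 * card E"
    using main[OF V finE] sub c7 by blast
  have "transversal V E T" using TV Ttr unfolding transversal_def by auto
  hence tauT: "tau V E \<le> card T" unfolding tau_def by (auto intro: Least_le)
  have "(\<Sum>u\<in>V. hdegree E u) = (\<Sum>e\<in>E. card (e \<inter> V))"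
    unfolding hdegree_def using handshake[OF V finE] .
  also have "\<dots> = (\<Sum>e\<in>E. 7)"
    using sub c7 by (intro sum.cong) (auto simp: Int_absorb2)
  finally have hsum: "(\<Sum>u\<in>V. hdegree E u) = 7 * card E" by simp
  have "77650 * (\<Sum>u\<in>V. hdegree E u) \<le> (\<Sum>u\<in>V. phi (hdegree E u) + 7 * fw (hdegree E u))"
    unfolding sum_distrib_left using phi_g by (intro sum_mono) auto
  hence "543550 * card E \<le> (\<Sum>u\<in>V. phi (hdegree E u)) + 7 * (\<Sum>u\<in>V. fw (hdegree E u))"
    by (simp add: hsum sum.distrib sum_distrib_left)
  hence "96050 * card T \<le> 18400 * card E + (\<Sum>u\<in>V. fw (hdegree E u))" using Tb by linarith
  thus ?thesis using tauT by linarith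
qed

lemma fw_sum:
  assumes "finite V"
  shows "(\<Sum>u\<in>V. fw (hdegree E u)) = 11093 * n_deg V E 1 + 17131 * n_deg V E 2 + 18250 * n_deg V E 3
                               + 18400 * n_deg_ge V E 4"
proof -
  have "\<And>d. fw d = 11093 * (if d = 1 then 1 else 0) + 17131 * (if d = 2 then 1 else 0)
      + 18250 * (if d = 3 then 1 else 0) + 18400 * (if d \<ge> 4 then 1 else 0)"
    unfolding fw_def by auto
  hence "(\<Sum>u\<in>V. fw (hdegree E u)) = (\<Sum>u\<in>V. 11093 * (if hdegree E u = 1 then 1 else 0) + 17131 * (if hdegree E u = 2 then 1 else 0)
      + 18250 * (if hdegree E u = 3 then 1 else 0) + 18400 * (if hdegree E u \<ge> 4 then 1 else 0))"
    by simp
  also have "\<dots> = 11093 * n_deg V E 1 + 17131 * n_deg V E 2 + 18250 * n_deg V E 3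
                               + 18400 * n_deg_ge V E 4"
    unfolding n_deg_def n_deg_ge_def using assms
    by (simp add: sum.distrib sum_distrib_left[symmetric] card_filter_sum)
  finally show ?thesis .
qed

theorem lemma1:
  fixes V :: "'a set" and E :: "'a set set"
  shows "(uniform 7 V E \<longrightarrow>
            96050 * tau V E \<le> 11093 * n_deg V E 1 + 17131 * n_deg V E 2 + 18250 * n_deg V E 3
                               + 18400 * n_deg_ge V E 4 + 18400 * card E)
         \<and> tuza_const 7 \<le> 18400 / 96050"
proof
  show "uniform 7 V E \<longrightarrow>
            96050 * tau V E \<le> 11093 * n_deg V E 1 + 17131 * n_deg V E 2 + 18250 * n_deg V E 3
                               + 18400 * n_deg_ge V E 4 + 18400 * card E"
  proof
    assume U: "uniform 7 V E"
    have "finite V" using U unfolding uniform_def hypergraph_def by auto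
    then show "96050 * tau V E \<le> 11093 * n_deg V E 1 + 17131 * n_deg V E 2 + 18250 * n_deg V E 3
                               + 18400 * n_deg_ge V E 4 + 18400 * card E"
      using bound_fw[OF U] fw_sum[of V E] by simp
  qed
next
  let ?X = "{real (tau V E) / real (card E + card V) | (V :: nat set) E. uniform 7 V E}"
  have ne: "?X \<noteq> {}"
  proof -
    have "uniform 7 ({}::nat set) {}" unfolding uniform_def hypergraph_def by simp
    thus ?thesis by blast
  qed
  have ub: "x \<le> 18400 / 96050" if "x \<in> ?X" for x
  proof -
    obtain V :: "nat set" and E where x: "x = real (tau V E) / real (card E + card V)"
      and U: "uniform 7 V E" using \<open>x \<in> ?X\<close> by blast
    have V: "finite V" using U unfolding uniform_def hypergraph_def by auto
    have "(\<Sum>u\<in>V. fw (hdegree E u)) \<le> (\<Sum>u\<in>V. 18400)" using fw_le by (intro sum_mono) auto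
    hence "96050 * tau V E \<le> 18400 * (card E + card V)" using bound_fw[OF U] by simp
    hence r: "96050 * real (tau V E) \<le> 18400 * real (card E + card V)" by (simp only: of_nat_le_iff[symmetric])
    show ?thesis
    proof (cases "card E + card V = 0")
      case True then show ?thesis using x by simp
    next
      case False
      hence "real (card E + card V) > 0" by (simp only: of_nat_0_less_iff[symmetric]) 
      then have s: "real (card E + card V) > 0" .
      have "real (tau V E) \<le> 18400 / 96050 * real (card E + card V)" using r by simp
      hence "real (tau V E) / real (card E + card V) \<le> (18400 / 96050 * real (card E + card V)) / real (card E + card V)"
        using s by (intro divide_right_mono) auto
      also have "\<dots> = 18400 / 96050" using s by (simp only: nonzero_mult_div_cancel_right less_irrefl)
      finally show ?thesis using x by simp
    qed
  qed
  show "tuza_const 7 \<le> 18400 / 96050"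
    unfolding tuza_const_def using ne ub by (intro cSup_least) auto
qed

end
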